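(* Let $\mathfrak{A}$ be a $(\circ,\wedge,\mathsf{A})$-algebra that is representable by partial functions. Then composition is completely right-distributive over joins: for every subset $S\subseteq\mathfrak{A}$ such that $\bigvee S$ exists and every $a\in\mathfrak{A}$, the join $\bigvee\{s\circ a\mid s\in S\}$ exists and equals $(\bigvee S)\circ a$.
   Context: A $(\circ,\wedge,\mathsf{A})$-algebra is a set with two binary operations $\circ,\wedge$ and one unary operation $\mathsf{A}$. An algebra of partial functions of this signature is a set of partial functions, with base $X$ the union of all their domains and ranges, closed under: composition $f\circ g=\{(x,z)\mid \exists y\,(x,y)\in f,(y,z)\in g\}$ (apply $f$ first, then $g$); intersection; antidomain $\mathsf{A}(f)=\{(x,x)\mid x\in X, x\notin\mathrm{dom}(f)\}$. A representation by partial functions is an isomorphism onto such an algebra; $\mathfrak{A}$ is representable if one exists. Joins and meets are taken in the order $a\le b\iff a\wedge b=a$. *)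

theory Defs
  imports Main
begin

text \<open>A (cmp, meet, A)-algebra is given by a carrier type 'a and three operations.
  Composition f;g applies f first, then g, i.e. relational composition f O g.\<close>

definition base_set :: "('a \<Rightarrow> ('x \<times> 'x) set) \<Rightarrow> 'x set" where
  "base_set h = (\<Union>a. Domain (h a) \<union> Range (h a))"

definition rep_antidom :: "'x set \<Rightarrow> ('x \<times> 'x) set \<Rightarrow> ('x \<times> 'x) set" where
  "rep_antidom X f = {(x, x) | x. x \<in> X \<and> x \<notin> Domain f}"

definition is_pfun_representation ::
  "('a \<Rightarrow> 'a \<Rightarrow> 'a) \<Rightarrow> ('a \<Rightarrow> 'a \<Rightarrow> 'a) \<Rightarrow> ('a \<Rightarrow> 'a) \<Rightarrow> ('a \<Rightarrow> ('x \<times> 'x) set) \<Rightarrow> bool" where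
  "is_pfun_representation cmp meet antidom h \<longleftrightarrow>
     inj h \<and>
     (\<forall>a. single_valued (h a)) \<and>
     (\<forall>a b. h (cmp a b) = h a O h b) \<and>
     (\<forall>a b. h (meet a b) = h a \<inter> h b) \<and>
     (\<forall>a. h (antidom a) = rep_antidom (base_set h) (h a))"

definition alg_le :: "('a \<Rightarrow> 'a \<Rightarrow> 'a) \<Rightarrow> 'a \<Rightarrow> 'a \<Rightarrow> bool" where
  "alg_le meet a b \<longleftrightarrow> meet a b = a"

definition is_join :: "('a \<Rightarrow> 'a \<Rightarrow> 'a) \<Rightarrow> 'a set \<Rightarrow> 'a \<Rightarrow> bool" where
  "is_join meet S j \<longleftrightarrow>
     (\<forall>s\<in>S. alg_le meet s j) \<and> (\<forall>u. (\<forall>s\<in>S. alg_le meet s u) \<longrightarrow> alg_le meet j u)"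

end

theory Submission
  imports Defs
begin

theorem mainTheorem9:
  fixes cmp meet :: "'a \<Rightarrow> 'a \<Rightarrow> 'a" and antidom :: "'a \<Rightarrow> 'a"
  assumes "\<exists>h :: 'a \<Rightarrow> ('x \<times> 'x) set. is_pfun_representation cmp meet antidom h"
  shows "\<forall>S j a. is_join meet S j \<longrightarrow> is_join meet ((\<lambda>s. cmp s a) ` S) (cmp j a)"
proof (intro allI impI)
  fix S j a
  assume J: "is_join meet S j"
  obtain h :: "'a \<Rightarrow> ('x \<times> 'x) set" where R: "is_pfun_representation cmp meet antidom h"
    using assms by blast
  have inj: "inj h" and sv: "\<And>a. single_valued (h a)" and hc: "\<And>a b. h (cmp a b) = h a O h b"
    and hm: "\<And>a b. h (meet a b) = h a \<inter> h b"
    and hA: "\<And>a. h (antidom a) = rep_antidom (base_set h) (h a)"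
    using R unfolding is_pfun_representation_def by auto
  define X where "X = base_set h"
  have domX: "\<And>b. Domain (h b) \<subseteq> X" unfolding X_def base_set_def by blast
  have hA': "\<And>b. h (antidom b) = {(x, x) | x. x \<in> X \<and> x \<notin> Domain (h b)}"
    using hA unfolding rep_antidom_def X_def by simp
  have le: "\<And>b c. alg_le meet b c \<longleftrightarrow> h b \<subseteq> h c"
  proof -
    fix b c
    have "alg_le meet b c \<longleftrightarrow> h (meet b c) = h b"
      unfolding alg_le_def using inj by (metis injD)
    then show "alg_le meet b c \<longleftrightarrow> h b \<subseteq> h c" using hm by auto
  qed
  have Jub: "\<forall>s\<in>S. h s \<subseteq> h j" and Jl: "\<And>u. (\<forall>s\<in>S. h s \<subseteq> h u) \<Longrightarrow> h j \<subseteq> h u"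
    using J unfolding is_join_def le by auto
  show "is_join meet ((\<lambda>s. cmp s a) ` S) (cmp j a)"
    unfolding is_join_def le
  proof (intro conjI allI impI ballI)
    fix t assume "t \<in> (\<lambda>s. cmp s a) ` S"
    then obtain s where "s \<in> S" "t = cmp s a" by blast
    then show "h t \<subseteq> h (cmp j a)" using Jub hc by (metis relcomp_mono order_refl)
  next
    fix u assume U: "\<forall>s\<in>(\<lambda>s. cmp s a) ` S. h s \<subseteq> h u"
    define p1 where "p1 = antidom (meet (cmp j a) u)"
    define p2 where "p2 = antidom (antidom (cmp j a))"
    define w where "w = cmp (antidom (meet p1 p2)) j"
    let ?D = "Domain (h j O h a)"
    let ?E = "Domain (h j O h a \<inter> h u)"
    have ha1: "h p1 = {(x, x) | x. x \<in> X \<and> x \<notin> ?E}"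
      unfolding p1_def hA' hm hc by simp
    have "?D \<subseteq> X" using domX[of j] by blast
    then have ha2: "h p2 = {(x, x) | x. x \<in> ?D}"
      unfolding p2_def hA' hc by auto
    have he: "h (antidom (meet p1 p2)) = {(x, x) | x. x \<in> X \<and> \<not> (x \<in> ?D \<and> x \<notin> ?E)}"
      unfolding hA' hm ha1 ha2 using \<open>?D \<subseteq> X\<close> by auto
    have hw: "\<And>x y. (x, y) \<in> h w \<longleftrightarrow> (x, y) \<in> h j \<and> (x \<in> ?D \<longrightarrow> x \<in> ?E)"
      unfolding w_def hc he using domX[of j] by blast
    have svja: "single_valued (h j O h a)" using sv single_valued_relcomp by blast
    have "\<forall>s\<in>S. h s \<subseteq> h w"
    proof (intro ballI subsetI)
      fix s p assume s: "s \<in> S" and p: "p \<in> h s"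
      obtain x y where pxy: "p = (x, y)" by fastforce
      have xyj: "(x, y) \<in> h j" using Jub s p pxy by auto
      have "x \<in> ?E" if "x \<in> ?D"
      proof -
        from that obtain z where z: "(x, z) \<in> h j O h a" by blast
        then obtain y' where "(x, y') \<in> h j" "(y', z) \<in> h a" by blast
        with xyj sv[of j] have "(y, z) \<in> h a" by (metis single_valued_def)
        then have "(x, z) \<in> h s O h a" using p pxy by blast
        then have "(x, z) \<in> h u" using U s hc by auto
        then show ?thesis using z by blast
      qed
      then show "p \<in> h w" using hw pxy xyj by blast
    qed
    then have jw: "h j \<subseteq> h w" using Jl by blast
    show "h (cmp j a) \<subseteq> h u"
    proof
      fix p assume "p \<in> h (cmp j a)"
      then obtain x z where pz: "p = (x, z)" and xz: "(x, z) \<in> h j O h a" using hc by auto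
      then obtain y where "(x, y) \<in> h j" by blast
      then have "x \<in> ?E" using jw hw xz by blast
      then obtain z' where "(x, z') \<in> h j O h a" "(x, z') \<in> h u" by blast
      with xz svja have "z' = z" by (metis single_valued_def)
      then show "p \<in> h u" using pz \<open>(x, z') \<in> h u\<close> by simp
    qed
  qed
qed

end
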